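(* Let $\mathbb{T}^2=\mathbb{R}^2/\mathbb{Z}^2$ with area form $\mu$, let $c>0$, and equip the group $\mathrm{Diff}_{\mu,\mathrm{ex}}(\mathbb{T}^2)$ of exact volumorphisms with the right-invariant metric given at the identity by $\langle\!\langle u,v\rangle\!\rangle=c\int_{\mathbb{T}^2}\langle du^\flat,dv^\flat\rangle\,d\mu$. Then the sectional curvature can assume both signs: there exist $u,v$ in the Lie algebra with $\langle\!\langle R(u,v)v,u\rangle\!\rangle>0$ and others with $\langle\!\langle R(u,v)v,u\rangle\!\rangle<0$ (among fields of the form $u=\mathrm{sgrad}\cos(jx+ky)$, $v=\mathrm{sgrad}\cos(lx+my)$, depending on $(j,k)$ and $(l,m)$).
   Context: $\mathrm{Diff}_{\mu,\mathrm{ex}}(\mathbb{T}^2)$ consists of symplectic (area-preserving) diffeomorphisms preserving the center of mass; its Lie algebra consists of Hamiltonian fields $\mathrm{sgrad} f=-f_y\partial_x+f_x\partial_y$. $d$ is the exterior derivative and $\flat$ the index-lowering isomorphism of the flat metric; $R$ is the curvature tensor of the Levi-Civita connection at the identity. *)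

theory Defs
  imports "HOL-Analysis.Analysis"
begin

text \<open>Points of the plane are pairs (x,y); the torus T^2 = R^2/Z^2 is modelled by
  functions on R^2 that are 1-periodic in both variables.\<close>

type_synonym pt = "real \<times> real"
type_synonym vfield = "pt \<Rightarrow> pt"

definition dx :: "(pt \<Rightarrow> real) \<Rightarrow> pt \<Rightarrow> real" where
  "dx f p = deriv (\<lambda>t. f (t, snd p)) (fst p)"

definition dy :: "(pt \<Rightarrow> real) \<Rightarrow> pt \<Rightarrow> real" where
  "dy f p = deriv (\<lambda>t. f (fst p, t)) (snd p)"

fun dpart :: "bool list \<Rightarrow> (pt \<Rightarrow> real) \<Rightarrow> pt \<Rightarrow> real" where
  "dpart [] f = f"
| "dpart (b # bs) f = (if b then dx else dy) (dpart bs f)"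

definition smooth2 :: "(pt \<Rightarrow> real) \<Rightarrow> bool" where
  "smooth2 f \<longleftrightarrow> (\<forall>bs. continuous_on UNIV (dpart bs f) \<and> (\<forall>p. dpart bs f differentiable at p))"

definition periodic2 :: "(pt \<Rightarrow> real) \<Rightarrow> bool" where
  "periodic2 f \<longleftrightarrow> (\<forall>x y. f (x + 1, y) = f (x, y) \<and> f (x, y + 1) = f (x, y))"

definition sgrad :: "(pt \<Rightarrow> real) \<Rightarrow> vfield" where
  "sgrad f = (\<lambda>p. (- dy f p, dx f p))"

text \<open>Lie algebra of Diff_{mu,ex}(T^2): Hamiltonian fields of smooth functions on T^2.\<close>
definition liealg :: "vfield set" where
  "liealg = {u. \<exists>f. smooth2 f \<and> periodic2 f \<and> u = sgrad f}"

definition vbracket :: "vfield \<Rightarrow> vfield \<Rightarrow> vfield" where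
  "vbracket u v = (\<lambda>p.
     (fst (u p) * dx (fst \<circ> v) p + snd (u p) * dy (fst \<circ> v) p
        - fst (v p) * dx (fst \<circ> u) p - snd (v p) * dy (fst \<circ> u) p,
      fst (u p) * dx (snd \<circ> v) p + snd (u p) * dy (snd \<circ> v) p
        - fst (v p) * dx (snd \<circ> u) p - snd (v p) * dy (snd \<circ> u) p))"

text \<open>d(u^flat) = (d_x u_2 - d_y u_1) dx/\dy; the flat metric gives <dx/\dy,dx/\dy> = 1.\<close>
definition curl :: "vfield \<Rightarrow> pt \<Rightarrow> real" where
  "curl u p = dx (snd \<circ> u) p - dy (fst \<circ> u) p"

definition metric :: "real \<Rightarrow> vfield \<Rightarrow> vfield \<Rightarrow> real" where
  "metric c u v = c * integral (cbox (0,0) (1,1)) (\<lambda>p. curl u p * curl v p)"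

text \<open>Levi-Civita connection at the identity of the right-invariant metric (Koszul formula
  for right-invariant fields, whose bracket is the vector field bracket).\<close>
definition LC :: "real \<Rightarrow> vfield \<Rightarrow> vfield \<Rightarrow> vfield" where
  "LC c u v = (THE w. w \<in> liealg \<and>
     (\<forall>z\<in>liealg. 2 * metric c w z =
        metric c (vbracket u v) z - metric c (vbracket u z) v - metric c (vbracket v z) u))"

definition curv :: "real \<Rightarrow> vfield \<Rightarrow> vfield \<Rightarrow> vfield \<Rightarrow> vfield" where
  "curv c u v w = LC c u (LC c v w) - LC c v (LC c u w) - LC c (vbracket u v) w"

definition cosmode :: "int \<Rightarrow> int \<Rightarrow> pt \<Rightarrow> real" where
  "cosmode j k = (\<lambda>(x, y). cos (2 * pi * (of_int j * x + of_int k * y)))"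

end

theory Submission
  imports Defs
begin


lemma dx_eq: "((\<lambda>t. f (t, snd p)) has_real_derivative D) (at (fst p)) \<Longrightarrow> dx f p = D"
  unfolding dx_def by (rule DERIV_imp_deriv)

lemma dy_eq: "((\<lambda>t. f (fst p, t)) has_real_derivative D) (at (snd p)) \<Longrightarrow> dy f p = D"
  unfolding dy_def by (rule DERIV_imp_deriv)

lemma pdx: assumes "f differentiable at p"
  shows "((\<lambda>t. f (t, snd p)) has_real_derivative dx f p) (at (fst p))"
proof -
  have "(\<lambda>t. (t, snd p)) differentiable at (fst p)"
    by (intro derivative_intros)
  hence "(f \<circ> (\<lambda>t. (t, snd p))) differentiable at (fst p)"
    using assms by (intro differentiable_chain_at) auto
  hence "(\<lambda>t. f (t, snd p)) differentiable at (fst p)" by (simp add: o_def)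
  thus ?thesis unfolding dx_def by (simp add: DERIV_deriv_iff_real_differentiable)
qed

lemma pdy: assumes "f differentiable at p"
  shows "((\<lambda>t. f (fst p, t)) has_real_derivative dy f p) (at (snd p))"
proof -
  have "(\<lambda>t. (fst p, t)) differentiable at (snd p)"
    by (intro derivative_intros)
  hence "(f \<circ> (\<lambda>t. (fst p, t))) differentiable at (snd p)"
    using assms by (intro differentiable_chain_at) auto
  hence "(\<lambda>t. f (fst p, t)) differentiable at (snd p)" by (simp add: o_def)
  thus ?thesis unfolding dy_def by (simp add: DERIV_deriv_iff_real_differentiable)
qed


lemma dpart_snoc: "dpart (bs @ [True]) f = dpart bs (dx f)" "dpart (bs @ [False]) f = dpart bs (dy f)"
  by (induction bs) auto

lemma smooth2_dx: "smooth2 f \<Longrightarrow> smooth2 (dx f)"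
  unfolding smooth2_def by (metis dpart_snoc(1))
lemma smooth2_dy: "smooth2 f \<Longrightarrow> smooth2 (dy f)"
  unfolding smooth2_def by (metis dpart_snoc(2))
lemma smooth2_cont: "smooth2 f \<Longrightarrow> continuous_on UNIV f"
  unfolding smooth2_def by (metis dpart.simps(1))
lemma smooth2_diff: "smooth2 f \<Longrightarrow> f differentiable at p"
  unfolding smooth2_def by (metis dpart.simps(1))

lemma smooth2_intro:
  assumes "f \<in> C" and cl: "\<And>g. g \<in> C \<Longrightarrow> dx g \<in> C \<and> dy g \<in> C \<and> continuous_on UNIV g \<and> (\<forall>p. g differentiable at p)"
  shows "smooth2 f"
proof -
  have "dpart bs f \<in> C" for bs
    by (induction bs) (auto simp: assms cl)
  thus ?thesis unfolding smooth2_def using cl by blast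
qed

definition spr :: "((pt \<Rightarrow> real) \<times> (pt \<Rightarrow> real)) list \<Rightarrow> pt \<Rightarrow> real" where
  "spr L p = sum_list (map (\<lambda>(g,k). g p * k p) L)"

lemma spr_simps[simp]: "spr [] p = 0" "spr ((g,k)#L) p = g p * k p + spr L p"
  by (auto simp: spr_def)

definition dspr where "dspr D L = concat (map (\<lambda>(g,k). [(D g, k), (g, D k)]) L)"

lemma spr_dx_has: assumes "\<forall>(g,k)\<in>set L. smooth2 g \<and> smooth2 k"
  shows "((\<lambda>t. spr L (t, snd p)) has_real_derivative spr (dspr dx L) p) (at (fst p))"
  using assms
proof (induction L)
  case Nil then show ?case by (simp add: dspr_def)
next
  case (Cons a L)
  obtain g k where a: "a = (g,k)" by force
  have g: "smooth2 g" and k: "smooth2 k" using Cons.prems a by auto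
  have "((\<lambda>t. g (t, snd p) * k (t, snd p) + spr L (t, snd p)) has_real_derivative
     (dx g p * k p + g p * dx k p) + spr (dspr dx L) p) (at (fst p))"
  proof (rule DERIV_add)
    show "((\<lambda>t. g (t, snd p) * k (t, snd p)) has_real_derivative dx g p * k p + g p * dx k p) (at (fst p))"
      using DERIV_mult'[OF pdx[OF smooth2_diff[OF g], of p] pdx[OF smooth2_diff[OF k], of p]] by (simp add: add.commute)
  qed (use Cons in auto)
  thus ?case by (simp add: a dspr_def algebra_simps)
qed

lemma spr_dy_has: assumes "\<forall>(g,k)\<in>set L. smooth2 g \<and> smooth2 k"
  shows "((\<lambda>t. spr L (fst p, t)) has_real_derivative spr (dspr dy L) p) (at (snd p))"
  using assms
proof (induction L)
  case Nil then show ?case by (simp add: dspr_def)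
next
  case (Cons a L)
  obtain g k where a: "a = (g,k)" by force
  have g: "smooth2 g" and k: "smooth2 k" using Cons.prems a by auto
  have "((\<lambda>t. g (fst p, t) * k (fst p, t) + spr L (fst p, t)) has_real_derivative
     (dy g p * k p + g p * dy k p) + spr (dspr dy L) p) (at (snd p))"
  proof (rule DERIV_add)
    show "((\<lambda>t. g (fst p, t) * k (fst p, t)) has_real_derivative dy g p * k p + g p * dy k p) (at (snd p))"
      using DERIV_mult'[OF pdy[OF smooth2_diff[OF g], of p] pdy[OF smooth2_diff[OF k], of p]] by (simp add: add.commute)
  qed (use Cons in auto)
  thus ?case by (simp add: a dspr_def algebra_simps)
qed

lemma spr_cont: "\<forall>(g,k)\<in>set L. smooth2 g \<and> smooth2 k \<Longrightarrow> continuous_on UNIV (spr L)"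
proof (induction L)
  case Nil then show ?case by (simp add: spr_def)
next
  case (Cons a L)
  obtain g k where a: "a = (g,k)" by force
  have "continuous_on UNIV (\<lambda>p. g p * k p + spr L p)"
    using Cons a smooth2_cont[of g] smooth2_cont[of k] by (intro continuous_on_add continuous_on_mult) auto
  thus ?case by (simp add: a)
qed

lemma spr_diff: "\<forall>(g,k)\<in>set L. smooth2 g \<and> smooth2 k \<Longrightarrow> spr L differentiable at p"
proof (induction L)
  case Nil then show ?case by (simp add: spr_def)
next
  case (Cons a L)
  obtain g k where a: "a = (g,k)" by force
  have "(\<lambda>p. g p * k p + spr L p) differentiable at p"
    using Cons a smooth2_diff by (intro derivative_intros) auto
  thus ?case by (simp add: a)
qed

lemma dspr_ok: "\<forall>(g,k)\<in>set L. smooth2 g \<and> smooth2 k \<Longrightarrow> (\<And>f. smooth2 f \<Longrightarrow> smooth2 (D f)) \<Longrightarrow>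
   \<forall>(g,k)\<in>set (dspr D L). smooth2 g \<and> smooth2 k"
  by (auto simp: dspr_def)

lemma smooth2_spr: assumes "\<forall>(g,k)\<in>set L. smooth2 g \<and> smooth2 k" shows "smooth2 (spr L)"
proof (rule smooth2_intro[where C="{spr L | L. \<forall>(g,k)\<in>set L. smooth2 g \<and> smooth2 k}"])
  show "spr L \<in> {spr L |L. \<forall>(g, k)\<in>set L. smooth2 g \<and> smooth2 k}" using assms by blast
next
  fix g assume "g \<in> {spr L |L. \<forall>(g, k)\<in>set L. smooth2 g \<and> smooth2 k}"
  then obtain M where M: "\<forall>(g, k)\<in>set M. smooth2 g \<and> smooth2 k" and g: "g = spr M" by blast
  have "dx g = spr (dspr dx M)" unfolding g by (rule ext, rule dx_eq, rule spr_dx_has[OF M])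
  moreover have "dy g = spr (dspr dy M)" unfolding g by (rule ext, rule dy_eq, rule spr_dy_has[OF M])
  ultimately show "dx g \<in> {spr L |L. \<forall>(g, k)\<in>set L. smooth2 g \<and> smooth2 k} \<and>
         dy g \<in> {spr L |L. \<forall>(g, k)\<in>set L. smooth2 g \<and> smooth2 k} \<and> continuous_on UNIV g \<and> (\<forall>p. g differentiable at p)"
    using dspr_ok[OF M, of dx] dspr_ok[OF M, of dy] smooth2_dx smooth2_dy spr_cont[OF M] spr_diff[OF M] g
    by blast
qed

lemma smooth2_const: "smooth2 (\<lambda>p. c)"
proof -
  have d: "dx (\<lambda>p. a) = (\<lambda>p. 0)" "dy (\<lambda>p. a) = (\<lambda>p. 0)" for a :: real
    by (rule ext, rule dx_eq, simp) (rule ext, rule dy_eq, simp)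
  show ?thesis
    by (rule smooth2_intro[where C="{\<lambda>p. a | a. True}"]) (auto simp: d)
qed

lemma smooth2_mult: "smooth2 f \<Longrightarrow> smooth2 g \<Longrightarrow> smooth2 (\<lambda>p. f p * g p)"
proof -
  have "spr [(f,g)] = (\<lambda>p. f p * g p)" by (rule ext) simp
  thus "smooth2 f \<Longrightarrow> smooth2 g \<Longrightarrow> smooth2 (\<lambda>p. f p * g p)" using smooth2_spr[of "[(f,g)]"] by simp
qed

lemma smooth2_add: "smooth2 f \<Longrightarrow> smooth2 g \<Longrightarrow> smooth2 (\<lambda>p. f p + g p)"
proof -
  have "spr [(f,\<lambda>p. 1),(g,\<lambda>p. 1)] = (\<lambda>p. f p + g p)" by (rule ext) simp
  thus "smooth2 f \<Longrightarrow> smooth2 g \<Longrightarrow> smooth2 (\<lambda>p. f p + g p)"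
    using smooth2_spr[of "[(f,\<lambda>p. 1),(g,\<lambda>p. 1)]"] smooth2_const by simp
qed

lemma smooth2_cmult: "smooth2 f \<Longrightarrow> smooth2 (\<lambda>p. c * f p)"
  using smooth2_mult[OF smooth2_const] by blast

lemma smooth2_minus: "smooth2 f \<Longrightarrow> smooth2 (\<lambda>p. - f p)"
  using smooth2_cmult[of f "-1"] by simp

lemma smooth2_sub: "smooth2 f \<Longrightarrow> smooth2 g \<Longrightarrow> smooth2 (\<lambda>p. f p - g p)"
  using smooth2_add[OF _ smooth2_minus] by simp


lemma dxh: "smooth2 f \<Longrightarrow> ((\<lambda>t. f (t, snd p)) has_real_derivative dx f p) (at (fst p))"
  by (rule pdx[OF smooth2_diff])
lemma dyh: "smooth2 f \<Longrightarrow> ((\<lambda>t. f (fst p, t)) has_real_derivative dy f p) (at (snd p))"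
  by (rule pdy[OF smooth2_diff])

lemma dx_add: "smooth2 f \<Longrightarrow> smooth2 g \<Longrightarrow> dx (\<lambda>p. f p + g p) = (\<lambda>p. dx f p + dx g p)"
  by (rule ext, rule dx_eq, intro DERIV_add dxh)
lemma dy_add: "smooth2 f \<Longrightarrow> smooth2 g \<Longrightarrow> dy (\<lambda>p. f p + g p) = (\<lambda>p. dy f p + dy g p)"
  by (rule ext, rule dy_eq, intro DERIV_add dyh)
lemma dx_sub: "smooth2 f \<Longrightarrow> smooth2 g \<Longrightarrow> dx (\<lambda>p. f p - g p) = (\<lambda>p. dx f p - dx g p)"
  by (rule ext, rule dx_eq, intro DERIV_diff dxh)
lemma dy_sub: "smooth2 f \<Longrightarrow> smooth2 g \<Longrightarrow> dy (\<lambda>p. f p - g p) = (\<lambda>p. dy f p - dy g p)"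
  by (rule ext, rule dy_eq, intro DERIV_diff dyh)
lemma dx_minus: "smooth2 f \<Longrightarrow> dx (\<lambda>p. - f p) = (\<lambda>p. - dx f p)"
  by (rule ext, rule dx_eq, intro DERIV_minus dxh)
lemma dy_minus: "smooth2 f \<Longrightarrow> dy (\<lambda>p. - f p) = (\<lambda>p. - dy f p)"
  by (rule ext, rule dy_eq, intro DERIV_minus dyh)
lemma dx_mult: "smooth2 f \<Longrightarrow> smooth2 g \<Longrightarrow> dx (\<lambda>p. f p * g p) = (\<lambda>p. dx f p * g p + f p * dx g p)"
  by (rule ext, rule dx_eq, drule dxh, drule dxh, drule (1) DERIV_mult', simp add: add.commute)
lemma dy_mult: "smooth2 f \<Longrightarrow> smooth2 g \<Longrightarrow> dy (\<lambda>p. f p * g p) = (\<lambda>p. dy f p * g p + f p * dy g p)"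
  by (rule ext, rule dy_eq, drule dyh, drule dyh, drule (1) DERIV_mult', simp add: add.commute)
lemma dx_const: "dx (\<lambda>p. c) = (\<lambda>p. 0)" by (rule ext, rule dx_eq, simp)
lemma dy_const: "dy (\<lambda>p. c) = (\<lambda>p. 0)" by (rule ext, rule dy_eq, simp)
lemma dx_zero: "dx (\<lambda>p. 0) = (\<lambda>p. 0)" by (rule dx_const)
lemma dy_zero: "dy (\<lambda>p. 0) = (\<lambda>p. 0)" by (rule dy_const)

lemma periodic2_dx: assumes "periodic2 f" "smooth2 f" shows "periodic2 (dx f)"
  unfolding periodic2_def
proof (intro allI conjI)
  fix x y
  have "((\<lambda>t. f (t, y)) has_real_derivative dx f (x + 1, y)) (at (x + 1))"
    using dxh[OF assms(2), of "(x+1,y)"] by simp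
  hence "((\<lambda>t. f (t + 1, y)) has_real_derivative dx f (x + 1, y)) (at x)"
    by (simp add: DERIV_shift)
  moreover have "(\<lambda>t. f (t + 1, y)) = (\<lambda>t. f (t, y))" using assms(1) unfolding periodic2_def by auto
  ultimately show "dx f (x + 1, y) = dx f (x, y)"
    by (intro dx_eq[symmetric]) simp
  show "dx f (x, y + 1) = dx f (x, y)"
    using assms(1) unfolding periodic2_def dx_def by simp
qed

lemma periodic2_dy: assumes "periodic2 f" "smooth2 f" shows "periodic2 (dy f)"
  unfolding periodic2_def
proof (intro allI conjI)
  fix x y
  have "((\<lambda>t. f (x, t)) has_real_derivative dy f (x, y + 1)) (at (y + 1))"
    using dyh[OF assms(2), of "(x,y+1)"] by simp
  hence "((\<lambda>t. f (x, t + 1)) has_real_derivative dy f (x, y + 1)) (at y)"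
    by (simp add: DERIV_shift)
  moreover have "(\<lambda>t. f (x, t + 1)) = (\<lambda>t. f (x, t))" using assms(1) unfolding periodic2_def by auto
  ultimately show "dy f (x, y + 1) = dy f (x, y)"
    by (intro dy_eq[symmetric]) simp
  show "dy f (x + 1, y) = dy f (x, y)"
    using assms(1) unfolding periodic2_def dy_def by simp
qed

definition S :: "(pt \<Rightarrow> real) \<Rightarrow> bool" where "S f \<longleftrightarrow> smooth2 f \<and> periodic2 f"

lemma S_sm: "S f \<Longrightarrow> smooth2 f" by (simp add: S_def)
lemma S_dx: "S f \<Longrightarrow> S (dx f)" by (simp add: S_def smooth2_dx periodic2_dx)
lemma S_dy: "S f \<Longrightarrow> S (dy f)" by (simp add: S_def smooth2_dy periodic2_dy)
lemma S_add: "S f \<Longrightarrow> S g \<Longrightarrow> S (\<lambda>p. f p + g p)" by (simp add: S_def smooth2_add periodic2_def)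
lemma S_sub: "S f \<Longrightarrow> S g \<Longrightarrow> S (\<lambda>p. f p - g p)" by (simp add: S_def smooth2_sub periodic2_def)
lemma S_mult: "S f \<Longrightarrow> S g \<Longrightarrow> S (\<lambda>p. f p * g p)" by (simp add: S_def smooth2_mult periodic2_def)
lemma S_minus: "S f \<Longrightarrow> S (\<lambda>p. - f p)" by (simp add: S_def smooth2_minus periodic2_def)
lemma S_cmult: "S f \<Longrightarrow> S (\<lambda>p. c * f p)" by (simp add: S_def smooth2_cmult periodic2_def)
lemma S_const: "S (\<lambda>p. c)" by (simp add: S_def smooth2_const periodic2_def)

definition sq :: "pt set" where "sq = cbox (0,0) (1,1)"

lemma S_int: "S f \<Longrightarrow> f integrable_on sq"
  unfolding sq_def by (rule integrable_continuous, rule continuous_on_subset[OF smooth2_cont[OF S_sm]]) auto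

lemma int_dy_zero: assumes "S H" shows "integral sq (dy H) = 0"
proof -
  have c: "continuous_on (cbox (0,0) (1,1)) (dy H)"
    using smooth2_cont[OF smooth2_dy[OF S_sm[OF assms]]] continuous_on_subset by blast
  have inner: "integral (cbox 0 1) (\<lambda>y. dy H (x, y)) = 0" for x :: real
  proof -
    have "((\<lambda>y. dy H (x, y)) has_integral (H (x,1) - H (x,0))) {0..1}"
    proof (rule fundamental_theorem_of_calculus[of 0 1 "\<lambda>y. H (x,y)"])
      fix t :: real
      have "((\<lambda>y. H (x, y)) has_real_derivative dy H (x,t)) (at t)"
        using dyh[OF S_sm[OF assms], of "(x,t)"] by simp
      thus "((\<lambda>y. H (x, y)) has_vector_derivative dy H (x, t)) (at t within {0..1})"
        by (simp add: has_real_derivative_iff_has_vector_derivative has_vector_derivative_at_within)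
    qed simp
    moreover have "H (x,1) = H (x,0)" using assms unfolding S_def periodic2_def
      by (metis add_0)
    ultimately show ?thesis by (simp add: cbox_interval integral_unique)
  qed
  show ?thesis unfolding sq_def integral_prod_continuous[OF c] inner by simp
qed

lemma int_dx_zero: assumes "S H" shows "integral sq (dx H) = 0"
proof -
  have c: "continuous_on (cbox (0,0) (1,1)) (dx H)"
    using smooth2_cont[OF smooth2_dx[OF S_sm[OF assms]]] continuous_on_subset by blast
  have c2: "continuous_on (cbox (0,0) (1,1)) (\<lambda>(x,y). dx H (x,y))"
    using c by simp
  have inner: "integral (cbox 0 1) (\<lambda>x. dx H (x, y)) = 0" for y :: real
  proof -
    have "((\<lambda>x. dx H (x, y)) has_integral (H (1,y) - H (0,y))) {0..1}"
    proof (rule fundamental_theorem_of_calculus[of 0 1 "\<lambda>x. H (x,y)"])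
      fix t :: real
      have "((\<lambda>x. H (x, y)) has_real_derivative dx H (t,y)) (at t)"
        using dxh[OF S_sm[OF assms], of "(t,y)"] by simp
      thus "((\<lambda>x. H (x, y)) has_vector_derivative dx H (t, y)) (at t within {0..1})"
        by (simp add: has_real_derivative_iff_has_vector_derivative has_vector_derivative_at_within)
    qed simp
    moreover have "H (1,y) = H (0,y)" using assms unfolding S_def periodic2_def
      by (metis add_0)
    ultimately show ?thesis by (simp add: cbox_interval integral_unique)
  qed
  have "integral sq (dx H) = integral (cbox 0 1) (\<lambda>x. integral (cbox 0 1) (\<lambda>y. dx H (x, y)))"
    unfolding sq_def by (rule integral_prod_continuous[OF c])
  also have "\<dots> = integral (cbox 0 1) (\<lambda>y. integral (cbox 0 1) (\<lambda>x. dx H (x, y)))"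
    using integral_swap_continuous[of 0 0 1 1 "\<lambda>x y. dx H (x,y)"] c2 by simp
  finally show ?thesis using inner by simp
qed

lemma int_add: "S f \<Longrightarrow> S g \<Longrightarrow> integral sq (\<lambda>p. f p + g p) = integral sq f + integral sq g"
  by (rule integral_add; rule S_int)
lemma int_sub: "S f \<Longrightarrow> S g \<Longrightarrow> integral sq (\<lambda>p. f p - g p) = integral sq f - integral sq g"
  by (rule integral_diff; rule S_int)
lemma int_minus: "integral sq (\<lambda>p. - f p) = - integral sq f"
  by (rule integral_neg)

lemma ibp_x: assumes "S f" "S g"
  shows "integral sq (\<lambda>p. dx f p * g p) = - integral sq (\<lambda>p. f p * dx g p)"
proof -
  have "0 = integral sq (dx (\<lambda>p. f p * g p))" using int_dx_zero[OF S_mult[OF assms]] by simp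
  also have "\<dots> = integral sq (\<lambda>p. dx f p * g p) + integral sq (\<lambda>p. f p * dx g p)"
    using assms by (simp add: dx_mult S_sm int_add S_mult S_dx)
  finally show ?thesis by simp
qed

lemma ibp_y: assumes "S f" "S g"
  shows "integral sq (\<lambda>p. dy f p * g p) = - integral sq (\<lambda>p. f p * dy g p)"
proof -
  have "0 = integral sq (dy (\<lambda>p. f p * g p))" using int_dy_zero[OF S_mult[OF assms]] by simp
  also have "\<dots> = integral sq (\<lambda>p. dy f p * g p) + integral sq (\<lambda>p. f p * dy g p)"
    using assms by (simp add: dy_mult S_sm int_add S_mult S_dy)
  finally show ?thesis by simp
qed


definition Lap :: "(pt \<Rightarrow> real) \<Rightarrow> pt \<Rightarrow> real" where
  "Lap f = (\<lambda>p. dx (dx f) p + dy (dy f) p)"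

lemmas Srules = S_dx S_dy S_add S_sub S_mult S_minus S_cmult S_const
lemmas smrules = smooth2_dx smooth2_dy smooth2_add smooth2_sub smooth2_mult smooth2_minus smooth2_cmult smooth2_const
lemmas drules = dx_add dx_sub dx_mult dx_minus dx_const dy_add dy_sub dy_mult dy_minus dy_const

lemma S_Lap: "S f \<Longrightarrow> S (Lap f)" unfolding Lap_def by (simp add: Srules)

lemma curl_sgrad: assumes "S f" shows "curl (sgrad f) = Lap f"
proof -
  have "snd \<circ> sgrad f = dx f" by (rule ext) (simp add: sgrad_def)
  moreover have "fst \<circ> sgrad f = (\<lambda>p. - dy f p)" by (rule ext) (simp add: sgrad_def)
  ultimately show ?thesis using assms
    by (intro ext) (simp add: curl_def Lap_def dy_minus S_sm smooth2_dy)
qed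

lemma metric_sgrad: "S f \<Longrightarrow> S g \<Longrightarrow> metric c (sgrad f) (sgrad g) = c * integral sq (\<lambda>p. Lap f p * Lap g p)"
  by (simp add: metric_def curl_sgrad sq_def)

lemma ibp_Lap: assumes "S f" "S g"
  shows "integral sq (\<lambda>p. f p * Lap g p) = integral sq (\<lambda>p. Lap f p * g p)"
proof -
  have "integral sq (\<lambda>p. f p * Lap g p) = integral sq (\<lambda>p. dx (dx g) p * f p) + integral sq (\<lambda>p. dy (dy g) p * f p)"
    using assms by (simp add: Lap_def distrib_left int_add[symmetric] Srules mult.commute)
  also have "\<dots> = - integral sq (\<lambda>p. dx g p * dx f p) - integral sq (\<lambda>p. dy g p * dy f p)"
    using assms by (simp add: ibp_x ibp_y Srules)
  also have "\<dots> = integral sq (\<lambda>p. dx (dx f) p * g p) + integral sq (\<lambda>p. dy (dy f) p * g p)"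
    using assms ibp_x[of "dx f" g] ibp_y[of "dy f" g] by (simp add: Srules mult.commute)
  also have "\<dots> = integral sq (\<lambda>p. Lap f p * g p)"
    using assms by (simp add: Lap_def distrib_right int_add[symmetric] Srules)
  finally show ?thesis .
qed

lemma TW: "S f \<Longrightarrow> S h \<Longrightarrow> metric c (sgrad f) (sgrad h) = c * integral sq (\<lambda>p. Lap (Lap f) p * h p)"
  by (simp add: metric_sgrad ibp_Lap S_Lap)

lemma T1: "S K \<Longrightarrow> S h \<Longrightarrow> curl V = K \<Longrightarrow> metric c V (sgrad h) = c * integral sq (\<lambda>p. Lap K p * h p)"
  by (simp add: metric_def curl_sgrad ibp_Lap sq_def[symmetric])

definition V1f :: "(pt \<Rightarrow> real) \<Rightarrow> (pt \<Rightarrow> real) \<Rightarrow> pt \<Rightarrow> real" where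
  "V1f a h = (\<lambda>q. dy a q * dx (dy h) q - dx a q * dy (dy h) q - dy h q * dx (dy a) q + dx h q * dy (dy a) q)"
definition V2f :: "(pt \<Rightarrow> real) \<Rightarrow> (pt \<Rightarrow> real) \<Rightarrow> pt \<Rightarrow> real" where
  "V2f a h = (\<lambda>q. - (dy a q * dx (dx h) q) + dx a q * dy (dx h) q + dy h q * dx (dx a) q - dx h q * dy (dx a) q)"

lemma vbr: assumes "S a" "S h" shows "vbracket (sgrad a) (sgrad h) = (\<lambda>q. (V1f a h q, V2f a h q))"
proof -
  have e: "fst \<circ> sgrad f = (\<lambda>p. - dy f p)" "snd \<circ> sgrad f = dx f" for f
    by (rule ext, simp add: sgrad_def)+
  show ?thesis using assms
    by (simp add: vbracket_def e V1f_def V2f_def dx_minus dy_minus S_sm smooth2_dy fun_eq_iff)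
      (simp add: sgrad_def)
qed

lemma S_V: "S a \<Longrightarrow> S h \<Longrightarrow> S (V1f a h)" "S a \<Longrightarrow> S h \<Longrightarrow> S (V2f a h)"
  by (simp_all add: V1f_def V2f_def Srules)

definition Pf :: "(pt \<Rightarrow> real) \<Rightarrow> (pt \<Rightarrow> real) \<Rightarrow> pt \<Rightarrow> real" where
  "Pf a g = (\<lambda>p. dy (dx (\<lambda>q. dy a q * dy g q)) p - dy (dy (\<lambda>q. dx a q * dy g q)) p
     + dy (\<lambda>q. dx (dy a) q * dy g q) p - dx (\<lambda>q. dy (dy a) q * dy g q) p
     + dx (dx (\<lambda>q. dy a q * dx g q)) p - dx (dy (\<lambda>q. dx a q * dx g q)) p
     + dy (\<lambda>q. dx (dx a) q * dx g q) p - dx (\<lambda>q. dy (dx a) q * dx g q) p)"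

lemma S_Pf: "S a \<Longrightarrow> S g \<Longrightarrow> S (Pf a g)"
  by (simp add: Pf_def Srules)

lemma curl_vbr: "S a \<Longrightarrow> S h \<Longrightarrow> curl (vbracket (sgrad a) (sgrad h)) = (\<lambda>p. dx (V2f a h) p - dy (V1f a h) p)"
  by (intro ext) (simp add: vbr curl_def o_def)

lemma T2_pw:
  assumes "S a" "S g" "S h"
  shows "dx (V2f a h) p * g p - dy (V1f a h) p * g p - Pf a g p * h p =
    dx (\<lambda>q. V2f a h q * g q + (dy a q * dy g q) * dy h q + (dy (dy a) q * dy g q) * h q
        + (dy a q * dx g q) * dx h q - dx (\<lambda>q. dy a q * dx g q) q * h q
        + dy (\<lambda>q. dx a q * dx g q) q * h q + (dy (dx a) q * dx g q) * h q) p
   + dy (\<lambda>q. - (V1f a h q * g q) - dx (\<lambda>q. dy a q * dy g q) q * h q - (dx a q * dy g q) * dy h q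
        + dy (\<lambda>q. dx a q * dy g q) q * h q - (dx (dy a) q * dy g q) * h q
        - (dx a q * dx g q) * dx h q - (dx (dx a) q * dx g q) * h q) p"
  using assms
  apply (simp add: Pf_def V1f_def V2f_def drules smrules S_sm)
  apply (simp add: algebra_simps)
  done


lemma int_total: assumes "\<And>p. F p = dx A p + dy B p" "S A" "S B" shows "integral sq F = 0"
proof -
  have "F = (\<lambda>p. dx A p + dy B p)" using assms(1) by auto
  thus ?thesis using assms by (simp add: int_add S_dx S_dy int_dx_zero int_dy_zero)
qed

lemma T2: assumes "S a" "S g" "S h"
  shows "integral sq (\<lambda>p. curl (vbracket (sgrad a) (sgrad h)) p * g p) = integral sq (\<lambda>p. Pf a g p * h p)"
proof -
  have z: "integral sq (\<lambda>p. dx (V2f a h) p * g p - dy (V1f a h) p * g p - Pf a g p * h p) = 0"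
    by (rule int_total[OF T2_pw[OF assms]]) (simp_all add: Srules S_V assms)
  have SV: "S (V1f a h)" "S (V2f a h)" using S_V assms by auto
  have "integral sq (\<lambda>p. dx (V2f a h) p * g p - dy (V1f a h) p * g p - Pf a g p * h p)
     = integral sq (\<lambda>p. dx (V2f a h) p * g p - dy (V1f a h) p * g p) - integral sq (\<lambda>p. Pf a g p * h p)"
    by (rule int_sub) (simp_all add: Srules SV assms S_Pf)
  moreover have "integral sq (\<lambda>p. curl (vbracket (sgrad a) (sgrad h)) p * g p)
      = integral sq (\<lambda>p. dx (V2f a h) p * g p - dy (V1f a h) p * g p)"
    using assms by (simp add: curl_vbr left_diff_distrib)
  ultimately show ?thesis using z by simp
qed

lemma per_shift_nat: assumes "periodic2 f"
  shows "f (x + real n, y) = f (x, y) \<and> f (x, y + real n) = f (x, y)"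
proof -
  have P: "\<And>x y. f (x + 1, y) = f (x, y)" "\<And>x y. f (x, y + 1) = f (x, y)"
    using assms unfolding periodic2_def by auto
  show ?thesis
  proof (induction n arbitrary: x y)
    case 0 then show ?case by simp
  next
    case (Suc n)
    have "f (x + real (Suc n), y) = f ((x + real n) + 1, y)" by (simp add: algebra_simps)
    also have "\<dots> = f (x, y)" using P(1)[of "x + real n" y] Suc by simp
    finally have 1: "f (x + real (Suc n), y) = f (x, y)" .
    have "f (x, y + real (Suc n)) = f (x, (y + real n) + 1)" by (simp add: algebra_simps)
    also have "\<dots> = f (x, y)" using P(2)[of x "y + real n"] Suc by simp
    finally show ?case using 1 by simp
  qed
qed

lemma per_shift: assumes "periodic2 f"
  shows "f (x + of_int n, y) = f (x, y) \<and> f (x, y + of_int n) = f (x, y)"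
proof (cases "n \<ge> 0")
  case True
  then show ?thesis using per_shift_nat[OF assms, of x "nat n" y] by simp
next
  case False
  define m where "m = nat (- n)"
  have m: "of_int n = - real m" using False unfolding m_def by simp
  have "f (x + of_int n, y) = f ((x + of_int n) + real m, y)"
       "f (x, y + of_int n) = f (x, (y + of_int n) + real m)"
    using per_shift_nat[OF assms, of "x + of_int n" m y] per_shift_nat[OF assms, of x m "y + of_int n"] by auto
  then show ?thesis using m by simp
qed

lemma per_zero: assumes "periodic2 f" "\<forall>p\<in>sq. f p = 0" shows "f p = 0"
proof -
  obtain x y where p: "p = (x,y)" by force
  have "f (x, y) = f (frac x + of_int \<lfloor>x\<rfloor>, frac y + of_int \<lfloor>y\<rfloor>)"
    by (simp add: frac_def)
  also have "\<dots> = f (frac x, frac y + of_int \<lfloor>y\<rfloor>)" using per_shift[OF assms(1)] by blast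
  also have "\<dots> = f (frac x, frac y)" using per_shift[OF assms(1)] by blast
  also have "\<dots> = 0" using assms(2) frac_lt_1[of x] frac_lt_1[of y] frac_ge_0[of x] frac_ge_0[of y]
    unfolding sq_def by simp
  finally show ?thesis using p by simp
qed

lemma box_ne: "box (0::pt) (1,1) \<noteq> {}"
proof -
  have "(1/2, 1/2) \<in> box (0::pt) (1,1)" by (simp add: mem_box Basis_prod_def)
  thus ?thesis by blast
qed

lemma sq_zero: assumes "S f" "integral sq (\<lambda>p. f p * f p) = 0" shows "\<forall>p\<in>sq. f p = 0"
proof -
  have c: "continuous_on (cbox (0,0) (1,1)) (\<lambda>p. f p * f p)"
    using smooth2_cont[OF smooth2_mult[OF S_sm[OF assms(1)] S_sm[OF assms(1)]]] continuous_on_subset by blast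
  have "\<forall>p\<in>cbox (0,0) (1,1). f p * f p = 0"
    using integral_cbox_eq_0_iff[OF c] assms(2) box_ne unfolding sq_def by (simp add: zero_prod_def)
  thus ?thesis unfolding sq_def by simp
qed

lemma harmonic_zero: assumes "S g" "integral sq (\<lambda>p. Lap g p * Lap g p) = 0"
  shows "dx g = (\<lambda>p. 0) \<and> dy g = (\<lambda>p. 0)"
proof -
  have L0: "\<forall>p\<in>sq. Lap g p = 0" using sq_zero[OF S_Lap[OF assms(1)] assms(2)] .
  have "integral sq (\<lambda>p. g p * Lap g p) = integral sq (\<lambda>p. 0)"
    by (rule integral_cong) (use L0 in simp)
  hence i0: "integral sq (\<lambda>p. g p * Lap g p) = 0" by simp
  have "integral sq (\<lambda>p. g p * Lap g p) = integral sq (\<lambda>p. dx (dx g) p * g p) + integral sq (\<lambda>p. dy (dy g) p * g p)"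
    using assms by (simp add: Lap_def distrib_left int_add[symmetric] Srules mult.commute)
  also have "\<dots> = - integral sq (\<lambda>p. dx g p * dx g p) - integral sq (\<lambda>p. dy g p * dy g p)"
    using assms by (simp add: ibp_x ibp_y Srules)
  finally have e: "integral sq (\<lambda>p. dx g p * dx g p) + integral sq (\<lambda>p. dy g p * dy g p) = 0"
    using i0 by simp
  have n1: "0 \<le> integral sq (\<lambda>p. dx g p * dx g p)"
    by (rule integral_nonneg) (simp_all add: S_int Srules assms)
  have n2: "0 \<le> integral sq (\<lambda>p. dy g p * dy g p)"
    by (rule integral_nonneg) (simp_all add: S_int Srules assms)
  have z1: "\<forall>p\<in>sq. dx g p = 0" using sq_zero[of "dx g"] e n1 n2 assms S_dx by simp
  have z2: "\<forall>p\<in>sq. dy g p = 0" using sq_zero[of "dy g"] e n1 n2 assms S_dy by simp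
  show ?thesis
    using per_zero[of "dx g", OF _ z1] per_zero[of "dy g", OF _ z2] S_dx[OF assms(1)] S_dy[OF assms(1)]
    unfolding S_def by auto
qed

lemma liealg_iff: "w \<in> liealg \<longleftrightarrow> (\<exists>f. S f \<and> w = sgrad f)"
  by (auto simp: liealg_def S_def)

lemma sgrad_sub: "S f \<Longrightarrow> S g \<Longrightarrow> sgrad (\<lambda>p. f p - g p) = (\<lambda>p. sgrad f p - sgrad g p)"
  by (simp add: sgrad_def fun_eq_iff dx_sub dy_sub S_sm)

lemma Lap_sub: "S f \<Longrightarrow> S g \<Longrightarrow> Lap (\<lambda>p. f p - g p) = (\<lambda>p. Lap f p - Lap g p)"
  by (simp add: Lap_def fun_eq_iff dx_sub dy_sub S_sm smooth2_dx smooth2_dy)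

lemma LC_char:
  assumes c: "c \<noteq> 0" and Sa: "S a" and Sb: "S b" and Sp: "S \<psi>" and SK: "S K"
    and K: "curl (vbracket (sgrad a) (sgrad b)) = K"
    and id: "\<And>p. 2 * Lap (Lap \<psi>) p = Lap K p - Pf a (Lap b) p - Pf b (Lap a) p"
  shows "LC c (sgrad a) (sgrad b) = sgrad \<psi>"
  unfolding LC_def
proof (rule the_equality)
  show "sgrad \<psi> \<in> liealg \<and> (\<forall>z\<in>liealg. 2 * metric c (sgrad \<psi>) z =
          metric c (vbracket (sgrad a) (sgrad b)) z - metric c (vbracket (sgrad a) z) (sgrad b) -
          metric c (vbracket (sgrad b) z) (sgrad a))"
  proof (intro conjI ballI)
    show "sgrad \<psi> \<in> liealg" using Sp liealg_iff by blast
    fix z assume "z \<in> liealg"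
    then obtain h where Sh: "S h" and z: "z = sgrad h" using liealg_iff by blast
    have m1: "metric c (sgrad \<psi>) z = c * integral sq (\<lambda>p. Lap (Lap \<psi>) p * h p)"
      using TW[OF Sp Sh] z by simp
    have m2: "metric c (vbracket (sgrad a) (sgrad b)) z = c * integral sq (\<lambda>p. Lap K p * h p)"
      using T1[OF SK Sh K] z by simp
    have m3: "metric c (vbracket (sgrad a) z) (sgrad b) = c * integral sq (\<lambda>p. Pf a (Lap b) p * h p)"
      using T2[OF Sa S_Lap[OF Sb] Sh] z by (simp add: metric_def curl_sgrad[OF Sb] sq_def)
    have m4: "metric c (vbracket (sgrad b) z) (sgrad a) = c * integral sq (\<lambda>p. Pf b (Lap a) p * h p)"
      using T2[OF Sb S_Lap[OF Sa] Sh] z by (simp add: metric_def curl_sgrad[OF Sa] sq_def)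
    have SP1: "S (Pf a (Lap b))" "S (Pf b (Lap a))" "S (Lap K)" "S (Lap (Lap \<psi>))"
      using S_Pf S_Lap Sa Sb SK Sp by auto
    have "integral sq (\<lambda>p. Lap K p * h p) - integral sq (\<lambda>p. Pf a (Lap b) p * h p) - integral sq (\<lambda>p. Pf b (Lap a) p * h p)
        = integral sq (\<lambda>p. (Lap K p - Pf a (Lap b) p - Pf b (Lap a) p) * h p)"
      using SP1 Sh by (simp add: left_diff_distrib int_sub Srules)
    also have "\<dots> = integral sq (\<lambda>p. (2 * Lap (Lap \<psi>) p) * h p)"
      by (simp only: id[symmetric])
    also have "\<dots> = 2 * integral sq (\<lambda>p. Lap (Lap \<psi>) p * h p)"
      by (simp add: mult.assoc)
    finally show "2 * metric c (sgrad \<psi>) z = metric c (vbracket (sgrad a) (sgrad b)) z -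
          metric c (vbracket (sgrad a) z) (sgrad b) - metric c (vbracket (sgrad b) z) (sgrad a)"
      unfolding m1 m2 m3 m4 by (simp add: algebra_simps)
  qed
next
  fix w assume w: "w \<in> liealg \<and> (\<forall>z\<in>liealg. 2 * metric c w z =
          metric c (vbracket (sgrad a) (sgrad b)) z - metric c (vbracket (sgrad a) z) (sgrad b) -
          metric c (vbracket (sgrad b) z) (sgrad a))"
  then obtain \<phi> where Sf: "S \<phi>" and wf: "w = sgrad \<phi>" using liealg_iff by blast
  define g where "g = (\<lambda>p. \<phi> p - \<psi> p)"
  have Sg: "S g" unfolding g_def using Sf Sp by (simp add: Srules)
  have zl: "sgrad g \<in> liealg" using Sg liealg_iff by blast
  have psi_prop: "2 * metric c (sgrad \<psi>) (sgrad g) = metric c (vbracket (sgrad a) (sgrad b)) (sgrad g) -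
          metric c (vbracket (sgrad a) (sgrad g)) (sgrad b) - metric c (vbracket (sgrad b) (sgrad g)) (sgrad a)"
  proof -
    have m1: "metric c (sgrad \<psi>) (sgrad g) = c * integral sq (\<lambda>p. Lap (Lap \<psi>) p * g p)"
      using TW[OF Sp Sg] by simp
    have m2: "metric c (vbracket (sgrad a) (sgrad b)) (sgrad g) = c * integral sq (\<lambda>p. Lap K p * g p)"
      using T1[OF SK Sg K] by simp
    have m3: "metric c (vbracket (sgrad a) (sgrad g)) (sgrad b) = c * integral sq (\<lambda>p. Pf a (Lap b) p * g p)"
      using T2[OF Sa S_Lap[OF Sb] Sg] by (simp add: metric_def curl_sgrad[OF Sb] sq_def)
    have m4: "metric c (vbracket (sgrad b) (sgrad g)) (sgrad a) = c * integral sq (\<lambda>p. Pf b (Lap a) p * g p)"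
      using T2[OF Sb S_Lap[OF Sa] Sg] by (simp add: metric_def curl_sgrad[OF Sa] sq_def)
    have SP1: "S (Pf a (Lap b))" "S (Pf b (Lap a))" "S (Lap K)" "S (Lap (Lap \<psi>))"
      using S_Pf S_Lap Sa Sb SK Sp by auto
    have "integral sq (\<lambda>p. Lap K p * g p) - integral sq (\<lambda>p. Pf a (Lap b) p * g p) - integral sq (\<lambda>p. Pf b (Lap a) p * g p)
        = integral sq (\<lambda>p. (Lap K p - Pf a (Lap b) p - Pf b (Lap a) p) * g p)"
      using SP1 Sg by (simp add: left_diff_distrib int_sub Srules)
    also have "\<dots> = integral sq (\<lambda>p. (2 * Lap (Lap \<psi>) p) * g p)"
      by (simp only: id[symmetric])
    also have "\<dots> = 2 * integral sq (\<lambda>p. Lap (Lap \<psi>) p * g p)"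
      by (simp add: mult.assoc)
    finally show ?thesis unfolding m1 m2 m3 m4 by (simp add: algebra_simps)
  qed
  have "2 * metric c (sgrad \<phi>) (sgrad g) = 2 * metric c (sgrad \<psi>) (sgrad g)"
    using w zl psi_prop wf by auto
  hence "c * integral sq (\<lambda>p. Lap \<phi> p * Lap g p) = c * integral sq (\<lambda>p. Lap \<psi> p * Lap g p)"
    using metric_sgrad Sf Sp Sg by simp
  hence "integral sq (\<lambda>p. Lap \<phi> p * Lap g p) - integral sq (\<lambda>p. Lap \<psi> p * Lap g p) = 0"
    using c by simp
  hence "integral sq (\<lambda>p. Lap \<phi> p * Lap g p - Lap \<psi> p * Lap g p) = 0"
    using Sf Sp Sg by (simp add: int_sub S_mult S_Lap)
  hence "integral sq (\<lambda>p. Lap g p * Lap g p) = 0"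
    using Sf Sp unfolding g_def by (simp add: Lap_sub left_diff_distrib)
  hence "dx g = (\<lambda>p. 0) \<and> dy g = (\<lambda>p. 0)" using harmonic_zero Sg by blast
  hence "dx \<phi> = dx \<psi> \<and> dy \<phi> = dy \<psi>"
    using Sf Sp unfolding g_def by (simp add: dx_sub dy_sub S_sm fun_eq_iff)
  thus "w = sgrad \<psi>" using wf by (simp add: sgrad_def)
qed


type_synonym tt = "real \<times> int \<times> int \<times> bool"

definition arg :: "int \<Rightarrow> int \<Rightarrow> pt \<Rightarrow> real" where
  "arg j k p = 2 * pi * (of_int j * fst p + of_int k * snd p)"

definition bas :: "int \<Rightarrow> int \<Rightarrow> bool \<Rightarrow> pt \<Rightarrow> real" where
  "bas j k s p = (if s then sin (arg j k p) else cos (arg j k p))"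

fun ev :: "tt list \<Rightarrow> pt \<Rightarrow> real" where
  "ev [] p = 0"
| "ev ((c,j,k,s) # P) p = c * bas j k s p + ev P p"

fun dxT :: "tt \<Rightarrow> tt" where
  "dxT (c,j,k,s) = (if s then (2 * pi * of_int j * c, j, k, False) else (- (2 * pi * of_int j * c), j, k, True))"
fun dyT :: "tt \<Rightarrow> tt" where
  "dyT (c,j,k,s) = (if s then (2 * pi * of_int k * c, j, k, False) else (- (2 * pi * of_int k * c), j, k, True))"
definition dxP :: "tt list \<Rightarrow> tt list" where "dxP = map dxT"
definition dyP :: "tt list \<Rightarrow> tt list" where "dyP = map dyT"
fun negT :: "tt \<Rightarrow> tt" where "negT (c,j,k,s) = (-c,j,k,s)"
definition negP :: "tt list \<Rightarrow> tt list" where "negP = map negT"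
fun smulT :: "real \<Rightarrow> tt \<Rightarrow> tt" where "smulT a (c,j,k,s) = (a*c,j,k,s)"
definition smulP :: "real \<Rightarrow> tt list \<Rightarrow> tt list" where "smulP a = map (smulT a)"

fun mulT :: "tt \<Rightarrow> tt \<Rightarrow> tt list" where
  "mulT (c,j,k,s) (d,l,m,r) =
    (if \<not> s \<and> \<not> r then [(c*d/2, j+l, k+m, False), (c*d/2, j-l, k-m, False)]
     else if s \<and> r then [(c*d/2, j-l, k-m, False), (-(c*d/2), j+l, k+m, False)]
     else if s \<and> \<not> r then [(c*d/2, j+l, k+m, True), (c*d/2, j-l, k-m, True)]
     else [(c*d/2, j+l, k+m, True), (-(c*d/2), j-l, k-m, True)])"

definition mulP :: "tt list \<Rightarrow> tt list \<Rightarrow> tt list" where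
  "mulP P Q = concat (map (\<lambda>t. concat (map (mulT t) Q)) P)"

lemma tt_induct: "Q [] \<Longrightarrow> (\<And>c j k s L. Q L \<Longrightarrow> Q ((c,j,k,s)#L)) \<Longrightarrow> Q L"
  by (induction L) auto

lemma ev_app: "ev (P @ Q) p = ev P p + ev Q p"
  by (induction P rule: tt_induct) auto

lemma ev_concat: "ev (concat Ls) p = sum_list (map (\<lambda>L. ev L p) Ls)"
  by (induction Ls) (auto simp: ev_app)

lemma ev_neg: "ev (negP P) p = - ev P p"
  unfolding negP_def by (induction P rule: tt_induct) auto

lemma ev_smul: "ev (smulP a P) p = a * ev P p"
  unfolding smulP_def by (induction P rule: tt_induct) (auto simp: algebra_simps)

lemma arg_add: "arg (j+l) (k+m) p = arg j k p + arg l m p"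
  by (simp add: arg_def algebra_simps)
lemma arg_diff: "arg (j-l) (k-m) p = arg j k p - arg l m p"
  by (simp add: arg_def algebra_simps)

lemma ev_mulT: "ev (mulT t u) p = ev [t] p * ev [u] p"
proof -
  obtain c j k s where t: "t = (c,j,k,s)" by (cases t) auto
  obtain d l m r where u: "u = (d,l,m,r)" by (cases u) auto
  show ?thesis unfolding t u
    by (cases s; cases r) (simp_all add: bas_def arg_add arg_diff cos_add cos_diff sin_add sin_diff algebra_simps)
qed

lemma ev_sum: "ev P p = sum_list (map (\<lambda>t. ev [t] p) P)"
  by (induction P rule: tt_induct) auto

lemma ev_mul: "ev (mulP P Q) p = ev P p * ev Q p"
proof -
  have "ev (mulP P Q) p = sum_list (map (\<lambda>t. sum_list (map (\<lambda>u. ev [t] p * ev [u] p) Q)) P)"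
    unfolding mulP_def ev_concat by (simp add: o_def ev_concat ev_mulT)
  also have "\<dots> = sum_list (map (\<lambda>t. ev [t] p * ev Q p) P)"
    by (simp add: ev_sum[of Q] sum_list_const_mult)
  also have "\<dots> = ev P p * ev Q p"
    by (simp add: ev_sum[of P] sum_list_mult_const)
  finally show ?thesis .
qed

lemma bas_dx: "((\<lambda>t. bas j k s (t, y)) has_real_derivative ev [dxT (1,j,k,s)] (x,y)) (at x)"
  by (cases s) (auto simp: bas_def arg_def intro!: derivative_eq_intros)

lemma bas_dy: "((\<lambda>t. bas j k s (x, t)) has_real_derivative ev [dyT (1,j,k,s)] (x,y)) (at y)"
  by (cases s) (auto simp: bas_def arg_def intro!: derivative_eq_intros)

lemma ev_dx_has: "((\<lambda>t. ev P (t, y)) has_real_derivative ev (dxP P) (x,y)) (at x)"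
proof (induction P rule: tt_induct)
  case 1 then show ?case by (simp add: dxP_def)
next
  case (2 c j k s P)
  have "((\<lambda>t. c * bas j k s (t, y) + ev P (t, y)) has_real_derivative c * ev [dxT (1,j,k,s)] (x,y) + ev (dxP P) (x,y)) (at x)"
    by (intro DERIV_add DERIV_cmult bas_dx 2)
  thus ?case by (cases s) (simp_all add: dxP_def algebra_simps)
qed

lemma ev_dy_has: "((\<lambda>t. ev P (x, t)) has_real_derivative ev (dyP P) (x,y)) (at y)"
proof (induction P rule: tt_induct)
  case 1 then show ?case by (simp add: dyP_def)
next
  case (2 c j k s P)
  have "((\<lambda>t. c * bas j k s (x, t) + ev P (x, t)) has_real_derivative c * ev [dyT (1,j,k,s)] (x,y) + ev (dyP P) (x,y)) (at y)"
    by (intro DERIV_add DERIV_cmult bas_dy 2)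
  thus ?case by (cases s) (simp_all add: dyP_def algebra_simps)
qed

lemma ev_dx: "dx (ev P) = ev (dxP P)"
  by (rule ext, rule dx_eq) (metis ev_dx_has prod.collapse)
lemma ev_dy: "dy (ev P) = ev (dyP P)"
  by (rule ext, rule dy_eq) (metis ev_dy_has prod.collapse)

lemma ev_cont: "continuous_on UNIV (ev P)"
proof (induction P rule: tt_induct)
  case 1 then show ?case by (simp add: continuous_on_const)
next
  case (2 c j k s P)
  have "continuous_on UNIV (\<lambda>p. c * bas j k s p + ev P p)"
    using 2 by (cases s) (auto simp: bas_def arg_def intro!: continuous_intros)
  thus ?case by simp
qed

lemma bas_differentiable: "bas j k s differentiable at p"
proof -
  have "((\<lambda>x. 2 * pi * (of_int j * fst x + of_int k * snd x)) has_derivative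
     (\<lambda>x. 2 * pi * (of_int j * fst x + of_int k * snd x))) (at p)"
    by (intro derivative_eq_intros) (auto simp: algebra_simps)
  hence "(\<lambda>x. arg j k x) differentiable at p" unfolding arg_def differentiable_def by blast
  thus ?thesis unfolding bas_def differentiable_def
    by (cases s) (auto intro: has_derivative_sin has_derivative_cos)
qed

lemma ev_differentiable: "ev P differentiable at p"
proof (induction P rule: tt_induct)
  case 1 then show ?case by simp
next
  case (2 c j k s P)
  have "(\<lambda>p. c * bas j k s p + ev P p) differentiable at p"
    using 2 bas_differentiable by (intro derivative_intros) auto
  thus ?case by simp
qed

lemma smooth2_ev: "smooth2 (ev P)"
  by (rule smooth2_intro[where C="range ev"]) (auto simp: ev_dx ev_dy ev_cont ev_differentiable)

lemma cos_shift_int: "cos (t + 2 * pi * of_int n) = cos t" "sin (t + 2 * pi * of_int n) = sin t"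
  by (simp_all add: cos_add sin_add)

lemma periodic2_ev: "periodic2 (ev P)"
  unfolding periodic2_def
proof (intro allI)
  fix x y
  show "ev P (x + 1, y) = ev P (x, y) \<and> ev P (x, y + 1) = ev P (x, y)"
  proof (induction P rule: tt_induct)
    case (2 c j k s P)
    have a1: "arg j k (x + 1, y) = arg j k (x,y) + 2 * pi * of_int j"
      and a2: "arg j k (x, y + 1) = arg j k (x,y) + 2 * pi * of_int k"
      by (simp_all add: arg_def algebra_simps)
    show ?case using 2 by (simp add: bas_def a1 a2 cos_shift_int)
  qed simp
qed

lemma S_ev: "S (ev P)" by (simp add: S_def smooth2_ev periodic2_ev)


fun canonT :: "tt \<Rightarrow> tt" where
  "canonT (c,j,k,s) = (if j < 0 \<or> (j = 0 \<and> k < 0) then (if s then -c else c, -j, -k, s) else (c,j,k,s))"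
definition keyT :: "tt \<Rightarrow> int \<times> int \<times> bool" where "keyT t = snd (canonT t)"
definition cfT :: "tt \<Rightarrow> real" where "cfT t = fst (canonT t)"
definition coef :: "tt list \<Rightarrow> int \<times> int \<times> bool \<Rightarrow> real" where
  "coef P q = sum_list (map (\<lambda>t. if keyT t = q then cfT t else 0) P)"
fun basq :: "int \<times> int \<times> bool \<Rightarrow> pt \<Rightarrow> real" where "basq (j,k,s) = bas j k s"

lemma arg_neg: "arg (-j) (-k) p = - arg j k p" by (simp add: arg_def algebra_simps)

lemma ev1_canon: "ev [t] p = cfT t * basq (keyT t) p"
proof -
  obtain c j k s where t: "t = (c,j,k,s)" by (cases t) auto
  show ?thesis unfolding t by (simp add: cfT_def keyT_def bas_def arg_neg)
qed

lemma coef_cons: "coef (t # P) q = (if keyT t = q then cfT t else 0) + coef P q"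
  by (simp add: coef_def)

lemma ev_coef: "finite K \<Longrightarrow> set (map keyT P) \<subseteq> K \<Longrightarrow> ev P p = (\<Sum>q\<in>K. coef P q * basq q p)"
proof (induction P)
  case Nil then show ?case by (simp add: coef_def)
next
  case (Cons t P)
  have "ev (t # P) p = ev [t] p + ev P p" using ev_app[of "[t]" P p] by simp
  also have "\<dots> = cfT t * basq (keyT t) p + (\<Sum>q\<in>K. coef P q * basq q p)"
    using Cons by (simp add: ev1_canon)
  also have "cfT t * basq (keyT t) p = (\<Sum>q\<in>K. if keyT t = q then cfT t * basq q p else 0)"
    using Cons.prems by (simp add: sum.delta)
  also have "\<dots> = (\<Sum>q\<in>K. (if keyT t = q then cfT t else 0) * basq q p)"
    by (rule sum.cong) auto
  finally show ?case by (simp add: coef_cons distrib_right sum.distrib)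
qed

lemma ev_check: assumes "\<forall>q\<in>set (map keyT (P @ Q)). q \<noteq> (0,0,True) \<longrightarrow> coef P q = coef Q q"
  shows "ev P = ev Q"
proof (rule ext)
  fix p
  let ?K = "set (map keyT (P @ Q))"
  have "ev P p = (\<Sum>q\<in>?K. coef P q * basq q p)" by (rule ev_coef) auto
  also have "\<dots> = (\<Sum>q\<in>?K. coef Q q * basq q p)"
  proof (rule sum.cong)
    fix q assume "q \<in> ?K"
    thus "coef P q * basq q p = coef Q q * basq q p"
      using assms by (cases "q = (0,0,True)") (auto simp: bas_def arg_def)
  qed simp
  also have "\<dots> = ev Q p" by (rule ev_coef[symmetric]) auto
  finally show "ev P p = ev Q p" .
qed

lemma int1: assumes "n \<noteq> 0"
  shows "integral {0..1} (\<lambda>x. cos (2 * pi * of_int n * x + \<phi>)) = 0"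
    and "integral {0..1} (\<lambda>x. sin (2 * pi * of_int n * x + \<phi>)) = 0"
proof -
  have w: "2 * pi * of_int n \<noteq> 0" using assms by simp
  have "((\<lambda>x. cos (2 * pi * of_int n * x + \<phi>)) has_integral
        (sin (2 * pi * of_int n * 1 + \<phi>) / (2 * pi * of_int n) - sin (2 * pi * of_int n * 0 + \<phi>) / (2 * pi * of_int n))) {0..1}"
  proof (rule fundamental_theorem_of_calculus)
    fix x :: real
    have "((\<lambda>x. sin (2 * pi * of_int n * x + \<phi>) / (2 * pi * of_int n)) has_real_derivative
       cos (2 * pi * of_int n * x + \<phi>)) (at x)"
      using w by (auto intro!: derivative_eq_intros)
    thus "((\<lambda>x. sin (2 * pi * of_int n * x + \<phi>) / (2 * pi * of_int n)) has_vector_derivative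
       cos (2 * pi * of_int n * x + \<phi>)) (at x within {0..1})"
      by (simp add: has_real_derivative_iff_has_vector_derivative has_vector_derivative_at_within)
  qed simp
  moreover have "sin (2 * pi * of_int n * 1 + \<phi>) = sin \<phi>"
    using cos_shift_int(2)[of \<phi> n] by (simp add: add.commute)
  ultimately show "integral {0..1} (\<lambda>x. cos (2 * pi * of_int n * x + \<phi>)) = 0"
    by (simp add: integral_unique)
  have "((\<lambda>x. sin (2 * pi * of_int n * x + \<phi>)) has_integral
        (- cos (2 * pi * of_int n * 1 + \<phi>) / (2 * pi * of_int n) - - cos (2 * pi * of_int n * 0 + \<phi>) / (2 * pi * of_int n))) {0..1}"
  proof (rule fundamental_theorem_of_calculus)
    fix x :: real
    have "((\<lambda>x. - cos (2 * pi * of_int n * x + \<phi>) / (2 * pi * of_int n)) has_real_derivative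
       sin (2 * pi * of_int n * x + \<phi>)) (at x)"
      using w by (auto intro!: derivative_eq_intros)
    thus "((\<lambda>x. - cos (2 * pi * of_int n * x + \<phi>) / (2 * pi * of_int n)) has_vector_derivative
       sin (2 * pi * of_int n * x + \<phi>)) (at x within {0..1})"
      by (simp add: has_real_derivative_iff_has_vector_derivative has_vector_derivative_at_within)
  qed simp
  moreover have "cos (2 * pi * of_int n * 1 + \<phi>) = cos \<phi>"
    using cos_shift_int(1)[of \<phi> n] by (simp add: add.commute)
  ultimately show "integral {0..1} (\<lambda>x. sin (2 * pi * of_int n * x + \<phi>)) = 0"
    by (simp add: integral_unique)
qed

lemma bas_cont: "continuous_on A (bas j k s)"
proof -
  have "continuous_on UNIV (ev [(1,j,k,s)])" by (rule ev_cont)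
  moreover have "ev [(1,j,k,s)] = bas j k s" by (rule ext) simp
  ultimately show ?thesis using continuous_on_subset by fastforce
qed

lemma int_bas: "integral sq (bas j k s) = (if j = 0 \<and> k = 0 \<and> \<not> s then 1 else 0)"
proof -
  have "integral sq (bas j k s) = integral (cbox 0 1) (\<lambda>x. integral (cbox 0 1) (\<lambda>y. bas j k s (x, y)))"
    unfolding sq_def by (rule integral_prod_continuous[OF bas_cont])
  also have "\<dots> = (if j = 0 \<and> k = 0 \<and> \<not> s then 1 else 0)"
  proof (cases "k = 0")
    case False
    have "integral (cbox 0 1) (\<lambda>y. bas j k s (x, y)) = 0" for x
    proof -
      have e: "arg j k (x,y) = 2 * pi * of_int k * y + 2 * pi * of_int j * x" for y
        by (simp add: arg_def algebra_simps)
      show ?thesis using int1[OF False, of "2 * pi * of_int j * x"] by (cases s) (simp_all add: bas_def e)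
    qed
    thus ?thesis using False by simp
  next
    case True
    have e: "arg j 0 (x,y) = 2 * pi * of_int j * x + 0" for x y by (simp add: arg_def)
    have "integral (cbox 0 1) (\<lambda>y. bas j k s (x, y)) = bas j 0 s (x, 0)" for x
      using True by (cases s) (simp_all add: bas_def e)
    hence "integral (cbox 0 1) (\<lambda>x. integral (cbox 0 1) (\<lambda>y. bas j k s (x, y))) = integral {0..1} (\<lambda>x. bas j 0 s (x, 0))"
      by simp
    also have "\<dots> = (if j = 0 \<and> k = 0 \<and> \<not> s then 1 else 0)"
    proof (cases "j = 0")
      case False
      thus ?thesis using int1[OF False, of 0] by (cases s) (simp_all add: bas_def e)
    qed (use True in \<open>cases s, simp_all add: bas_def arg_def\<close>)
    finally show ?thesis .
  qed
  finally show ?thesis .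
qed

fun intT :: "tt \<Rightarrow> real" where "intT (c,j,k,s) = (if j = 0 \<and> k = 0 \<and> \<not> s then c else 0)"
definition intL :: "tt list \<Rightarrow> real" where "intL P = sum_list (map intT P)"

lemma int_ev: "integral sq (ev P) = intL P"
proof (induction P rule: tt_induct)
  case 1 then show ?case by (simp add: intL_def)
next
  case (2 c j k s L)
  have "ev ((c,j,k,s) # L) = (\<lambda>p. c * bas j k s p + ev L p)" by (rule ext) simp
  hence "integral sq (ev ((c,j,k,s) # L)) = integral sq (\<lambda>p. c * bas j k s p + ev L p)" by simp
  also have "\<dots> = integral sq (\<lambda>p. c * bas j k s p) + integral sq (ev L)"
    by (rule integral_add) (auto simp: sq_def intro!: integrable_continuous continuous_intros bas_cont
        continuous_on_subset[OF ev_cont])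
  also have "\<dots> = c * integral sq (bas j k s) + intL L"
    using 2 by simp
  finally show ?case by (simp add: int_bas intL_def del: ev.simps)
qed


definition V1L :: "tt list \<Rightarrow> tt list \<Rightarrow> tt list" where
  "V1L A B = mulP (dyP A) (dxP (dyP B)) @ negP (mulP (dxP A) (dyP (dyP B))) @ negP (mulP (dyP B) (dxP (dyP A)))
     @ mulP (dxP B) (dyP (dyP A))"
definition V2L :: "tt list \<Rightarrow> tt list \<Rightarrow> tt list" where
  "V2L A B = negP (mulP (dyP A) (dxP (dxP B))) @ mulP (dxP A) (dyP (dxP B)) @ mulP (dyP B) (dxP (dxP A))
     @ negP (mulP (dxP B) (dyP (dxP A)))"
definition KL :: "tt list \<Rightarrow> tt list \<Rightarrow> tt list" where
  "KL A B = dxP (V2L A B) @ negP (dyP (V1L A B))"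
definition LapL :: "tt list \<Rightarrow> tt list" where
  "LapL A = dxP (dxP A) @ dyP (dyP A)"
definition PL :: "tt list \<Rightarrow> tt list \<Rightarrow> tt list" where
  "PL A G = dyP (dxP (mulP (dyP A) (dyP G))) @ negP (dyP (dyP (mulP (dxP A) (dyP G))))
     @ dyP (mulP (dxP (dyP A)) (dyP G)) @ negP (dxP (mulP (dyP (dyP A)) (dyP G)))
     @ dxP (dxP (mulP (dyP A) (dxP G))) @ negP (dxP (dyP (mulP (dxP A) (dxP G))))
     @ dyP (mulP (dxP (dxP A)) (dxP G)) @ negP (dxP (mulP (dyP (dxP A)) (dxP G)))"

lemma V1_ev: "V1f (ev A) (ev B) = ev (V1L A B)"
  by (rule ext) (simp add: V1f_def V1L_def ev_dx ev_dy ev_app ev_neg ev_mul)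
lemma V2_ev: "V2f (ev A) (ev B) = ev (V2L A B)"
  by (rule ext) (simp add: V2f_def V2L_def ev_dx ev_dy ev_app ev_neg ev_mul)

lemma ev_fold: "(\<lambda>p. ev P p - ev Q p) = ev (P @ negP Q)" "(\<lambda>p. ev P p + ev Q p) = ev (P @ Q)"
  "(\<lambda>p. - ev P p) = ev (negP P)"
  by (rule ext, simp add: ev_app ev_neg)+

lemma K_ev: "curl (vbracket (sgrad (ev A)) (sgrad (ev B))) = ev (KL A B)"
  by (simp add: curl_vbr S_ev V1_ev V2_ev ev_dx ev_dy ev_fold KL_def)

lemma Lap_ev: "Lap (ev A) = ev (LapL A)"
  by (simp add: Lap_def ev_dx ev_dy ev_fold LapL_def)

lemma Pf_ev: "Pf (ev A) (ev G) = ev (PL A G)"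
  by (rule ext) (simp add: Pf_def PL_def ev_dx ev_dy ev_app ev_neg ev_mul[symmetric])

lemma LC_ev:
  assumes "c \<noteq> 0"
    and "ev (smulP 2 (LapL (LapL \<Psi>))) = ev (LapL (KL A B) @ negP (PL A (LapL B)) @ negP (PL B (LapL A)))"
  shows "LC c (sgrad (ev A)) (sgrad (ev B)) = sgrad (ev \<Psi>)"
proof (rule LC_char[OF assms(1) S_ev S_ev S_ev S_ev K_ev])
  fix p
  have "ev (smulP 2 (LapL (LapL \<Psi>))) p = ev (LapL (KL A B) @ negP (PL A (LapL B)) @ negP (PL B (LapL A))) p"
    using assms(2) by simp
  thus "2 * Lap (Lap (ev \<Psi>)) p = Lap (ev (KL A B)) p - Pf (ev A) (Lap (ev B)) p - Pf (ev B) (Lap (ev A)) p"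
    by (simp add: Lap_ev Pf_ev ev_smul ev_app ev_neg)
qed

lemma VB_ev:
  assumes "ev (V1L A B) = ev (negP (dyP Bt))" "ev (V2L A B) = ev (dxP Bt)"
  shows "vbracket (sgrad (ev A)) (sgrad (ev B)) = sgrad (ev Bt)"
proof -
  have "vbracket (sgrad (ev A)) (sgrad (ev B)) = (\<lambda>q. (ev (V1L A B) q, ev (V2L A B) q))"
    by (simp add: vbr S_ev V1_ev V2_ev)
  thus ?thesis using assms by (simp add: sgrad_def ev_dx ev_dy ev_neg fun_eq_iff)
qed

lemma sgrad_ev_diff: "sgrad (ev P) - sgrad (ev Q) = sgrad (ev (P @ negP Q))"
  by (simp add: ev_fold(1)[symmetric] sgrad_sub S_ev fun_diff_def)

lemma metric_ev: "metric c (sgrad (ev R)) (sgrad (ev A)) = c * intL (mulP (LapL R) (LapL A))"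
proof -
  have "(\<lambda>p. ev (LapL R) p * ev (LapL A) p) = ev (mulP (LapL R) (LapL A))" by (rule ext) (simp add: ev_mul)
  thus ?thesis by (simp add: metric_sgrad S_ev Lap_ev int_ev)
qed

lemma cosmode_ev: "cosmode j k = ev [(1,j,k,False)]"
  by (rule ext) (auto simp: cosmode_def bas_def arg_def)


lemmas evdefs = V1L_def V2L_def KL_def LapL_def PL_def dxP_def dyP_def negP_def smulP_def mulP_def
  keyT_def cfT_def coef_def


lemma curv_ev:
  assumes c: "c \<noteq> 0"
    and h0: "ev (smulP 2 (LapL (LapL []))) = ev (LapL (KL B B) @ negP (PL B (LapL B)) @ negP (PL B (LapL B)))"
    and h0': "ev (smulP 2 (LapL (LapL []))) = ev (LapL (KL A []) @ negP (PL A (LapL [])) @ negP (PL [] (LapL A)))"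
    and h1: "ev (smulP 2 (LapL (LapL Pa))) = ev (LapL (KL A B) @ negP (PL A (LapL B)) @ negP (PL B (LapL A)))"
    and h2: "ev (smulP 2 (LapL (LapL Pb))) = ev (LapL (KL B Pa) @ negP (PL B (LapL Pa)) @ negP (PL Pa (LapL B)))"
    and hb1: "ev (V1L A B) = ev (negP (dyP Bt))" and hb2: "ev (V2L A B) = ev (dxP Bt)"
    and h3: "ev (smulP 2 (LapL (LapL Pc))) = ev (LapL (KL Bt B) @ negP (PL Bt (LapL B)) @ negP (PL B (LapL Bt)))"
  shows "metric c (curv c (sgrad (ev A)) (sgrad (ev B)) (sgrad (ev B))) (sgrad (ev A))
       = c * intL (mulP (LapL ((negP Pb) @ negP Pc)) (LapL A))"
proof -
  have e1: "LC c (sgrad (ev B)) (sgrad (ev B)) = sgrad (ev [])" by (rule LC_ev[OF c h0])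
  have e2: "LC c (sgrad (ev A)) (sgrad (ev [])) = sgrad (ev [])" by (rule LC_ev[OF c h0'])
  have e3: "LC c (sgrad (ev A)) (sgrad (ev B)) = sgrad (ev Pa)" by (rule LC_ev[OF c h1])
  have e4: "LC c (sgrad (ev B)) (sgrad (ev Pa)) = sgrad (ev Pb)" by (rule LC_ev[OF c h2])
  have e5: "vbracket (sgrad (ev A)) (sgrad (ev B)) = sgrad (ev Bt)" by (rule VB_ev[OF hb1 hb2])
  have e6: "LC c (sgrad (ev Bt)) (sgrad (ev B)) = sgrad (ev Pc)" by (rule LC_ev[OF c h3])
  have "curv c (sgrad (ev A)) (sgrad (ev B)) (sgrad (ev B)) = sgrad (ev (([] @ negP Pb) @ negP Pc))"
    unfolding curv_def e1 e2 e3 e4 e5 e6 sgrad_ev_diff by simp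
  thus ?thesis by (simp add: metric_ev)
qed


lemmas evdefs2 = evdefs

lemma neg_ex:
  assumes c: "c > 0"
  shows "metric c (curv c (sgrad (cosmode 1 0)) (sgrad (cosmode 0 1)) (sgrad (cosmode 0 1))) (sgrad (cosmode 1 0)) < 0"
proof -
  have cn: "c \<noteq> 0" using c by simp
  have m: "metric c (curv c (sgrad (cosmode 1 0)) (sgrad (cosmode 0 1)) (sgrad (cosmode 0 1))) (sgrad (cosmode 1 0))
    = c * intL (mulP (LapL ((negP [(-(7/100) * (2*pi)^4, 1, -2, False), (1/2 * (2*pi)^4, 1, 0, False), (-(7/100) * (2*pi)^4, 1, 2, False)]) @ negP [(11/100 * (2*pi)^4, 1, -2, False), (1/2 * (2*pi)^4, 1, 0, False), (11/100 * (2*pi)^4, 1, 2, False)])) (LapL [(1,1,0,False)]))"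
    unfolding cosmode_ev
  proof (rule curv_ev[OF cn, where Pa="[(1/4 * (2*pi)^2, 1, -1, False), (-(1/4) * (2*pi)^2, 1, 1, False)]" and Bt="[(1/2 * (2*pi)^2, 1, -1, False), (-(1/2) * (2*pi)^2, 1, 1, False)]"])
    show "ev (smulP 2 (LapL (LapL []))) = ev (LapL (KL [(1,0,1,False)] [(1,0,1,False)]) @ negP (PL [(1,0,1,False)] (LapL [(1,0,1,False)])) @ negP (PL [(1,0,1,False)] (LapL [(1,0,1,False)])))"
      by (rule ev_check, simp add: evdefs, (simp_all add: algebra_simps power2_eq_square eval_nat_numeral)?)
    show "ev (smulP 2 (LapL (LapL []))) = ev (LapL (KL [(1,1,0,False)] []) @ negP (PL [(1,1,0,False)] (LapL [])) @ negP (PL [] (LapL [(1,1,0,False)])))"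
      by (rule ev_check, simp add: evdefs, (simp_all add: algebra_simps power2_eq_square eval_nat_numeral)?)
    show "ev (smulP 2 (LapL (LapL [(1/4 * (2*pi)^2, 1, -1, False), (-(1/4) * (2*pi)^2, 1, 1, False)]))) = ev (LapL (KL [(1,1,0,False)] [(1,0,1,False)]) @ negP (PL [(1,1,0,False)] (LapL [(1,0,1,False)])) @ negP (PL [(1,0,1,False)] (LapL [(1,1,0,False)])))"
      by (rule ev_check, simp add: evdefs, (simp_all add: algebra_simps power2_eq_square eval_nat_numeral)?)
    show "ev (smulP 2 (LapL (LapL [(-(7/100) * (2*pi)^4, 1, -2, False), (1/2 * (2*pi)^4, 1, 0, False), (-(7/100) * (2*pi)^4, 1, 2, False)]))) = ev (LapL (KL [(1,0,1,False)] [(1/4 * (2*pi)^2, 1, -1, False), (-(1/4) * (2*pi)^2, 1, 1, False)]) @ negP (PL [(1,0,1,False)] (LapL [(1/4 * (2*pi)^2, 1, -1, False), (-(1/4) * (2*pi)^2, 1, 1, False)])) @ negP (PL [(1/4 * (2*pi)^2, 1, -1, False), (-(1/4) * (2*pi)^2, 1, 1, False)] (LapL [(1,0,1,False)])))"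
      by (rule ev_check, simp add: evdefs, (simp_all add: algebra_simps power2_eq_square eval_nat_numeral)?)
    show "ev (V1L [(1,1,0,False)] [(1,0,1,False)]) = ev (negP (dyP [(1/2 * (2*pi)^2, 1, -1, False), (-(1/2) * (2*pi)^2, 1, 1, False)]))"
      by (rule ev_check, simp add: evdefs, (simp_all add: algebra_simps power2_eq_square eval_nat_numeral)?)
    show "ev (V2L [(1,1,0,False)] [(1,0,1,False)]) = ev (dxP [(1/2 * (2*pi)^2, 1, -1, False), (-(1/2) * (2*pi)^2, 1, 1, False)])"
      by (rule ev_check, simp add: evdefs, (simp_all add: algebra_simps power2_eq_square eval_nat_numeral)?)
    show "ev (smulP 2 (LapL (LapL [(11/100 * (2*pi)^4, 1, -2, False), (1/2 * (2*pi)^4, 1, 0, False), (11/100 * (2*pi)^4, 1, 2, False)]))) = ev (LapL (KL [(1/2 * (2*pi)^2, 1, -1, False), (-(1/2) * (2*pi)^2, 1, 1, False)] [(1,0,1,False)]) @ negP (PL [(1/2 * (2*pi)^2, 1, -1, False), (-(1/2) * (2*pi)^2, 1, 1, False)] (LapL [(1,0,1,False)])) @ negP (PL [(1,0,1,False)] (LapL [(1/2 * (2*pi)^2, 1, -1, False), (-(1/2) * (2*pi)^2, 1, 1, False)])))"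
      by (rule ev_check, simp add: evdefs, (simp_all add: algebra_simps power2_eq_square eval_nat_numeral)?)
  qed
  have v: "intL (mulP (LapL ((negP [(-(7/100) * (2*pi)^4, 1, -2, False), (1/2 * (2*pi)^4, 1, 0, False), (-(7/100) * (2*pi)^4, 1, 2, False)]) @ negP [(11/100 * (2*pi)^4, 1, -2, False), (1/2 * (2*pi)^4, 1, 0, False), (11/100 * (2*pi)^4, 1, 2, False)])) (LapL [(1,1,0,False)])) = -(1/2) * (2*pi)^8"
    by (simp add: evdefs intL_def, (simp_all add: algebra_simps power2_eq_square eval_nat_numeral)?)
  show ?thesis unfolding m v using c by (simp add: mult_pos_neg mult_pos_pos)
qed

lemma pos_ex:
  assumes c: "c > 0"
  shows "metric c (curv c (sgrad (cosmode 0 2)) (sgrad (cosmode 1 3)) (sgrad (cosmode 1 3))) (sgrad (cosmode 0 2)) > 0"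
proof -
  have cn: "c \<noteq> 0" using c by simp
  have m: "metric c (curv c (sgrad (cosmode 0 2)) (sgrad (cosmode 1 3)) (sgrad (cosmode 1 3))) (sgrad (cosmode 0 2))
    = c * intL (mulP (LapL ((negP [(-(2890/169) * (2*pi)^4, 0, 2, False), (-(209/50) * (2*pi)^4, 2, 4, False), (-(2375/7514) * (2*pi)^4, 2, 8, False)]) @ negP [(14 * (2*pi)^4, 0, 2, False), (31/50 * (2*pi)^4, 2, 4, False), (253/578 * (2*pi)^4, 2, 8, False)])) (LapL [(1,0,2,False)]))"
    unfolding cosmode_ev
  proof (rule curv_ev[OF cn, where Pa="[(-11 * (2*pi)^2, 1, 1, False), (95/169 * (2*pi)^2, 1, 5, False)]" and Bt="[(-1 * (2*pi)^2, 1, 1, False), (1 * (2*pi)^2, 1, 5, False)]"])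
    show "ev (smulP 2 (LapL (LapL []))) = ev (LapL (KL [(1,1,3,False)] [(1,1,3,False)]) @ negP (PL [(1,1,3,False)] (LapL [(1,1,3,False)])) @ negP (PL [(1,1,3,False)] (LapL [(1,1,3,False)])))"
      by (rule ev_check, simp add: evdefs, (simp_all add: algebra_simps power2_eq_square eval_nat_numeral)?)
    show "ev (smulP 2 (LapL (LapL []))) = ev (LapL (KL [(1,0,2,False)] []) @ negP (PL [(1,0,2,False)] (LapL [])) @ negP (PL [] (LapL [(1,0,2,False)])))"
      by (rule ev_check, simp add: evdefs, (simp_all add: algebra_simps power2_eq_square eval_nat_numeral)?)
    show "ev (smulP 2 (LapL (LapL [(-11 * (2*pi)^2, 1, 1, False), (95/169 * (2*pi)^2, 1, 5, False)]))) = ev (LapL (KL [(1,0,2,False)] [(1,1,3,False)]) @ negP (PL [(1,0,2,False)] (LapL [(1,1,3,False)])) @ negP (PL [(1,1,3,False)] (LapL [(1,0,2,False)])))"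
      by (rule ev_check, simp add: evdefs, (simp_all add: algebra_simps power2_eq_square eval_nat_numeral)?)
    show "ev (smulP 2 (LapL (LapL [(-(2890/169) * (2*pi)^4, 0, 2, False), (-(209/50) * (2*pi)^4, 2, 4, False), (-(2375/7514) * (2*pi)^4, 2, 8, False)]))) = ev (LapL (KL [(1,1,3,False)] [(-11 * (2*pi)^2, 1, 1, False), (95/169 * (2*pi)^2, 1, 5, False)]) @ negP (PL [(1,1,3,False)] (LapL [(-11 * (2*pi)^2, 1, 1, False), (95/169 * (2*pi)^2, 1, 5, False)])) @ negP (PL [(-11 * (2*pi)^2, 1, 1, False), (95/169 * (2*pi)^2, 1, 5, False)] (LapL [(1,1,3,False)])))"
      by (rule ev_check, simp add: evdefs, (simp_all add: algebra_simps power2_eq_square eval_nat_numeral)?)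
    show "ev (V1L [(1,0,2,False)] [(1,1,3,False)]) = ev (negP (dyP [(-1 * (2*pi)^2, 1, 1, False), (1 * (2*pi)^2, 1, 5, False)]))"
      by (rule ev_check, simp add: evdefs, (simp_all add: algebra_simps power2_eq_square eval_nat_numeral)?)
    show "ev (V2L [(1,0,2,False)] [(1,1,3,False)]) = ev (dxP [(-1 * (2*pi)^2, 1, 1, False), (1 * (2*pi)^2, 1, 5, False)])"
      by (rule ev_check, simp add: evdefs, (simp_all add: algebra_simps power2_eq_square eval_nat_numeral)?)
    show "ev (smulP 2 (LapL (LapL [(14 * (2*pi)^4, 0, 2, False), (31/50 * (2*pi)^4, 2, 4, False), (253/578 * (2*pi)^4, 2, 8, False)]))) = ev (LapL (KL [(-1 * (2*pi)^2, 1, 1, False), (1 * (2*pi)^2, 1, 5, False)] [(1,1,3,False)]) @ negP (PL [(-1 * (2*pi)^2, 1, 1, False), (1 * (2*pi)^2, 1, 5, False)] (LapL [(1,1,3,False)])) @ negP (PL [(1,1,3,False)] (LapL [(-1 * (2*pi)^2, 1, 1, False), (1 * (2*pi)^2, 1, 5, False)])))"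
      by (rule ev_check, simp add: evdefs, (simp_all add: algebra_simps power2_eq_square eval_nat_numeral)?)
  qed
  have v: "intL (mulP (LapL ((negP [(-(2890/169) * (2*pi)^4, 0, 2, False), (-(209/50) * (2*pi)^4, 2, 4, False), (-(2375/7514) * (2*pi)^4, 2, 8, False)]) @ negP [(14 * (2*pi)^4, 0, 2, False), (31/50 * (2*pi)^4, 2, 4, False), (253/578 * (2*pi)^4, 2, 8, False)])) (LapL [(1,0,2,False)])) = 4192/169 * (2*pi)^8"
    by (simp add: evdefs intL_def, (simp_all add: algebra_simps power2_eq_square eval_nat_numeral)?)
  show ?thesis unfolding m v using c by (simp add: mult_pos_neg mult_pos_pos)
qed


theorem corollary7p5:
  fixes c :: real
  assumes "c > 0"
  shows "(\<exists>j k l m :: int.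
            metric c (curv c (sgrad (cosmode j k)) (sgrad (cosmode l m)) (sgrad (cosmode l m)))
                     (sgrad (cosmode j k)) > 0)
       \<and> (\<exists>j k l m :: int.
            metric c (curv c (sgrad (cosmode j k)) (sgrad (cosmode l m)) (sgrad (cosmode l m)))
                     (sgrad (cosmode j k)) < 0)"
    using neg_ex[OF assms] pos_ex[OF assms] by blast

end
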